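(* Let $a_1,a_2,a_3,a_4,a_5$ be rational numbers with $1\geqslant a_1\geqslant a_2\geqslant a_3\geqslant a_4\geqslant a_5\geqslant 0$, and let $\delta\geqslant 0$ be rational. Let $N$ be the largest number among $a_2,\ a_2+a_3,\ a_2+a_4,\ a_2+a_5,\ a_3+a_4,\ a_3+a_5,\ a_4+a_5,\ a_2+a_3+a_4,\ a_2+a_3+a_5,\ a_2+a_4+a_5,\ a_3+a_4+a_5,\ a_2+a_3+a_4+a_5$ that does not exceed $1$. Define $$\alpha=\begin{cases}\frac{2}{3+2a_1+2\delta+a_2+a_3+a_4} & \text{if } a_2+a_3\leqslant 1+a_4,\\ \frac{2}{3+2a_1+2\delta+a_2+a_4} & \text{if } a_2+a_4\leqslant 1 \text{ and } a_2+a_3>1+a_4,\\ \frac{2}{3+2a_1+2\delta+a_3+a_4} & \text{if } a_3+a_4\leqslant 1,\ a_2+a_4>1 \text{ and } a_2+a_3>1+a_4,\\ \frac{2}{3+2a_1+2\delta+a_2} & \text{if } a_3+a_4>1,\ a_2+a_4>1 \text{ and } a_2+a_3>1+a_4.\end{cases}$$ Then $$\frac{2}{3+2a_1+2\delta+N}\leqslant\frac{2}{3}\cdot\frac{4+2\delta+a_1+a_2+a_3+a_4+a_5}{4+4\delta+2(a_1+a_2+a_3+a_4+a_5)-a_1^2-a_2^2-a_3^2-a_4^2-a_5^2}$$ and $$\alpha\leqslant\frac{8+4\delta+2a_1+2a_2+2a_3+2a_4}{12+12\delta+6a_1+6a_2+6a_3+6a_4-3a_1^2-3a_2^2-3a_3^2-3a_4^2}.$$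 Moreover, both inequalities are strict unless $a_1=\delta=0$.
   Context: Here $\alpha$ is merely the number defined in the statement (not an $\alpha$-invariant). *)

theory Defs
  imports Complex_Main
begin

definition N_val :: "rat \<Rightarrow> rat \<Rightarrow> rat \<Rightarrow> rat \<Rightarrow> rat" where
  "N_val a2 a3 a4 a5 = Max {x \<in> {a2, a2+a3, a2+a4, a2+a5, a3+a4, a3+a5, a4+a5,
      a2+a3+a4, a2+a3+a5, a2+a4+a5, a3+a4+a5, a2+a3+a4+a5}. x \<le> 1}"

definition alpha_val :: "rat \<Rightarrow> rat \<Rightarrow> rat \<Rightarrow> rat \<Rightarrow> rat \<Rightarrow> rat" where
  "alpha_val a1 a2 a3 a4 \<delta> =
    (if a2 + a3 \<le> 1 + a4 then 2 / (3 + 2*a1 + 2*\<delta> + a2 + a3 + a4)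
     else if a2 + a4 \<le> 1 then 2 / (3 + 2*a1 + 2*\<delta> + a2 + a4)
     else if a3 + a4 \<le> 1 then 2 / (3 + 2*a1 + 2*\<delta> + a3 + a4)
     else 2 / (3 + 2*a1 + 2*\<delta> + a2))"

end

theory Submission
  imports Defs
begin

lemma sq_ge: "(a::rat)^2 \<ge> a - 1/4"
proof -
  have "0 \<le> (a - 1/2)^2" by simp
  thus ?thesis by (simp add: power2_eq_square algebra_simps)
qed

lemma sq_le: "0 \<le> (a::rat) \<Longrightarrow> a \<le> 1 \<Longrightarrow> a^2 \<le> a"
  by (simp add: power2_eq_square mult_left_le)

lemma expand:
  fixes a1 \<delta> M T Q :: rat
  shows "(3+2*a1+2*\<delta>+M)*(4+2*\<delta>+T) - 3*(4+4*\<delta>+2*T-Q) =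
     2*\<delta> + 4*(a1*\<delta>) + 4*(\<delta>*\<delta>) + 2*(\<delta>*M) + 2*(\<delta>*T) + 8*a1 + 2*(a1*T) + 4*M + M*T - 3*T + 3*Q"
  by (simp add: algebra_simps)

lemma gen:
  fixes a1 \<delta> M T Q c :: rat
  assumes "\<delta> \<ge> 0" "M \<ge> 0" "T \<ge> 0" "a1 \<ge> 0" "8*a1 + 4*M - 3*T + 3*Q \<ge> c"
  shows "(3+2*a1+2*\<delta>+M)*(4+2*\<delta>+T) - 3*(4+4*\<delta>+2*T-Q) \<ge> 2*\<delta> + c"
proof -
  have "a1*\<delta> \<ge> 0" "\<delta>*\<delta> \<ge> 0" "\<delta>*M \<ge> 0" "\<delta>*T \<ge> 0" "a1*T \<ge> 0" "M*T \<ge> 0"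
    using assms by auto
  thus ?thesis using assms unfolding expand by linarith
qed

lemma frac_le:
  fixes A B D :: rat
  assumes "A > 0" "D > 0" "A*B - 3*D \<ge> 0"
  shows "2/A \<le> (2/3)*(B/D)"
  using assms by (simp add: field_simps)

lemma frac_less:
  fixes A B D :: rat
  assumes "A > 0" "D > 0" "A*B - 3*D > 0"
  shows "2/A < (2/3)*(B/D)"
  using assms by (simp add: field_simps)

theorem propositionA1:
  fixes a1 a2 a3 a4 a5 \<delta> :: rat
  assumes "1 \<ge> a1" "a1 \<ge> a2" "a2 \<ge> a3" "a3 \<ge> a4" "a4 \<ge> a5" "a5 \<ge> 0"
    and "\<delta> \<ge> 0"
  defines "L1 \<equiv> 2 / (3 + 2*a1 + 2*\<delta> + N_val a2 a3 a4 a5)"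
    and "R1 \<equiv> (2/3) * ((4 + 2*\<delta> + a1 + a2 + a3 + a4 + a5) /
              (4 + 4*\<delta> + 2*(a1 + a2 + a3 + a4 + a5) - a1^2 - a2^2 - a3^2 - a4^2 - a5^2))"
    and "L2 \<equiv> alpha_val a1 a2 a3 a4 \<delta>"
    and "R2 \<equiv> (8 + 4*\<delta> + 2*a1 + 2*a2 + 2*a3 + 2*a4) /
              (12 + 12*\<delta> + 6*a1 + 6*a2 + 6*a3 + 6*a4 - 3*a1^2 - 3*a2^2 - 3*a3^2 - 3*a4^2)"
  shows "L1 \<le> R1 \<and> L2 \<le> R2 \<and> (\<not> (a1 = 0 \<and> \<delta> = 0) \<longrightarrow> L1 < R1 \<and> L2 < R2)"
proof -
  define N where "N = N_val a2 a3 a4 a5"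
  define X where "X = {x \<in> {a2, a2+a3, a2+a4, a2+a5, a3+a4, a3+a5, a4+a5,
      a2+a3+a4, a2+a3+a5, a2+a4+a5, a3+a4+a5, a2+a3+a4+a5}. x \<le> (1::rat)}"
  have fin: "finite X" unfolding X_def by simp
  have NX: "N = Max X" unfolding N_def N_val_def X_def by simp
  have a2X: "a2 \<in> X" unfolding X_def using assms(1-7) by auto
  have N1: "N \<ge> a2" unfolding NX using fin a2X by simp
  have N2: "a2 + a3 \<le> 1 \<Longrightarrow> N \<ge> a2 + a3"
    unfolding NX using fin by (intro Max_ge) (auto simp: X_def)
  define S where "S = a1+a2+a3+a4+a5"
  define Q where "Q = a1^2+a2^2+a3^2+a4^2+a5^2"
  define T where "T = a1+a2+a3+a4"
  define Q4 where "Q4 = a1^2+a2^2+a3^2+a4^2"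
  have s1: "a1^2 \<le> a1" "a2^2 \<le> a2" "a3^2 \<le> a3" "a4^2 \<le> a4" "a5^2 \<le> a5"
    using assms(1-7) by (auto intro!: sq_le)
  have g1: "a1^2 \<ge> a1 - 1/4" "a2^2 \<ge> a2 - 1/4" "a3^2 \<ge> a3 - 1/4" "a4^2 \<ge> a4 - 1/4"
    by (rule sq_ge)+
  have z: "a1^2 \<ge> 0" "a2^2 \<ge> 0" "a3^2 \<ge> 0" "a4^2 \<ge> 0" "a5^2 \<ge> 0" by simp_all
  have D1: "4+4*\<delta>+2*S-Q > 0" using s1 assms(1-7) S_def Q_def by linarith
  have D2: "4+4*\<delta>+2*T-Q4 > 0" using s1 assms(1-7) T_def Q4_def by linarith
  have R1e: "R1 = (2/3)*((4+2*\<delta>+S)/(4+4*\<delta>+2*S-Q))"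
    unfolding R1_def S_def Q_def by (simp add: algebra_simps)
  have R2e: "R2 = (2/3)*((4+2*\<delta>+T)/(4+4*\<delta>+2*T-Q4))"
  proof -
    have "R2 = (2*(4+2*\<delta>+T))/(3*(4+4*\<delta>+2*T-Q4))"
      unfolding R2_def T_def Q4_def by (simp add: algebra_simps)
    thus ?thesis by simp
  qed
  have L1e: "L1 = 2/(3+2*a1+2*\<delta>+N)" unfolding L1_def N_def by simp
  obtain c where c: "8*a1 + 4*N - 3*S + 3*Q \<ge> c" "c \<ge> 0" "a1 > 0 \<Longrightarrow> c > 0"
  proof (cases "a2 + a3 \<le> 1")
    case True
    show ?thesis
      by (rule that[of a1]) (use N2[OF True] z assms(1-7) S_def Q_def in linarith)+
  next
    case False
    show ?thesis
      by (rule that[of "3*a1 - 3/2"]) (use N1 False g1 z assms(1-7) S_def Q_def in linarith)+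
  qed
  have P1: "(3+2*a1+2*\<delta>+N)*(4+2*\<delta>+S) - 3*(4+4*\<delta>+2*S-Q) \<ge> 2*\<delta> + c"
    by (rule gen) (use assms(1-7) c N1 in \<open>auto simp: S_def\<close>)
  have A1: "3+2*a1+2*\<delta>+N > 0" using assms(1-7) N1 by linarith
  obtain M where M: "L2 = 2/(3+2*a1+2*\<delta>+M)" "M \<ge> 0"
    and c2: "8*a1 + 4*M - 3*T + 3*Q4 \<ge> a1" "a1 > 0 \<Longrightarrow> 8*a1 + 4*M - 3*T + 3*Q4 > 0"
  proof -
    consider (A) "a2 + a3 \<le> 1 + a4" | (B) "\<not> a2 + a3 \<le> 1 + a4" "a2 + a4 \<le> 1"
      | (C) "\<not> a2 + a3 \<le> 1 + a4" "\<not> a2 + a4 \<le> 1" "a3 + a4 \<le> 1"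
      | (D) "\<not> a2 + a3 \<le> 1 + a4" "\<not> a2 + a4 \<le> 1" "\<not> a3 + a4 \<le> 1" by blast
    thus ?thesis
    proof cases
      case A
      have "L2 = 2/(3+2*a1+2*\<delta>+(a2+a3+a4))" using A by (simp add: L2_def alpha_val_def add.assoc)
      moreover have "8*a1 + 4*a2+4*a3+4*a4 - 3*T + 3*Q4 \<ge> a1" using assms(1-7) z T_def Q4_def by linarith
      hence "8*a1 + 4*(a2+a3+a4) - 3*T + 3*Q4 \<ge> a1" by (simp add: algebra_simps)
      ultimately show ?thesis using assms(1-7) by (intro that[of "a2+a3+a4"]) auto
    next
      case B
      have "L2 = 2/(3+2*a1+2*\<delta>+(a2+a4))" using B by (simp add: L2_def alpha_val_def add.assoc)
      moreover have "8*a1 + 4*a2+4*a4 - 3*T + 3*Q4 \<ge> a1" using assms(1-7) z T_def Q4_def by linarith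
      hence "8*a1 + 4*(a2+a4) - 3*T + 3*Q4 \<ge> a1" by (simp add: algebra_simps)
      ultimately show ?thesis using assms(1-7) by (intro that[of "a2+a4"]) auto
    next
      case C
      have "L2 = 2/(3+2*a1+2*\<delta>+(a3+a4))" using C by (simp add: L2_def alpha_val_def add.assoc)
      moreover have "8*a1 + 4*a3+4*a4 - 3*T + 3*Q4 \<ge> a1" using assms(1-7) z T_def Q4_def by linarith
      hence "8*a1 + 4*(a3+a4) - 3*T + 3*Q4 \<ge> a1" by (simp add: algebra_simps)
      ultimately show ?thesis using assms(1-7) by (intro that[of "a3+a4"]) auto
    next
      case D
      have "L2 = 2/(3+2*a1+2*\<delta>+a2)" using D by (simp add: L2_def alpha_val_def add.assoc)
      moreover have "8*a1 + 4*a2 - 3*T + 3*Q4 \<ge> a1" using D assms(1-7) g1 T_def Q4_def by linarith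
      ultimately show ?thesis using assms(1-7) by (intro that[of "a2"]) auto
    qed
  qed
  have P2: "(3+2*a1+2*\<delta>+M)*(4+2*\<delta>+T) - 3*(4+4*\<delta>+2*T-Q4) \<ge> 2*\<delta> + a1"
    by (rule gen) (use assms(1-7) c2 M in \<open>auto simp: T_def\<close>)
  have P2': "a1 > 0 \<Longrightarrow> (3+2*a1+2*\<delta>+M)*(4+2*\<delta>+T) - 3*(4+4*\<delta>+2*T-Q4) > 0"
    using P2 assms(1-7) by linarith
  have A2: "3+2*a1+2*\<delta>+M > 0" using assms(1-7) M by linarith
  show ?thesis
  proof (intro conjI impI)
    show "L1 \<le> R1" unfolding L1e R1e using A1 D1 P1 c assms(1-7) by (intro frac_le) auto
    show "L2 \<le> R2" unfolding M(1) R2e using A2 D2 P2 assms(1-7) by (intro frac_le) auto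
    assume nz: "\<not> (a1 = 0 \<and> \<delta> = 0)"
    have pos: "a1 > 0 \<or> \<delta> > 0" using nz assms(1-7) by auto
    show "L1 < R1" unfolding L1e R1e using A1 D1 P1 c pos assms(1-7) by (intro frac_less) auto
    show "L2 < R2" unfolding M(1) R2e using A2 D2 P2 pos assms(1-7) by (intro frac_less) auto
  qed
qed

end
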